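(* For every integer $n>1$ there is a set $S$ of $n$ points in the plane $\mathbb{R}^2$ in convex position such that every Steiner tree $T$ on $S$ has dilation (with respect to $S$) at least $\frac{1}{\sin(\pi/n)}$, and $\frac{1}{\sin(\pi/n)} > \frac{n}{\pi}$.
   Context: A set of points is in convex position if all of them lie on the boundary of their convex hull. A Steiner tree on a finite set $S\subset\mathbb{R}^2$ is a tree $T$ whose vertex set is a finite subset of $\mathbb{R}^2$ containing $S$ (vertices not in $S$ are Steiner points; their number and positions are arbitrary). Each edge $(u,v)$ is realized as the straight segment $uv$ and has weight equal to the Euclidean distance $d(u,v)$; edges may cross or overlap. $d_T(u,v)$ denotes the length of the (unique) path in $T$ between $u$ and $v$. The dilation of $T$ with respect to $S$ is $\max_{u,v\in S,\,u\neq v} d_T(u,v)/d(u,v)$. *)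

theory Defs
  imports "HOL-Analysis.Analysis"
begin

type_synonym pt = "real ^ 2"

definition convex_position :: "pt set \<Rightarrow> bool" where
  "convex_position S \<longleftrightarrow> S \<subseteq> frontier (convex hull S)"

definition is_walk :: "pt set set \<Rightarrow> pt list \<Rightarrow> bool" where
  "is_walk E p \<longleftrightarrow> p \<noteq> [] \<and> (\<forall>(a, b) \<in> set (zip p (tl p)). {a, b} \<in> E)"

definition walk_weight :: "pt list \<Rightarrow> real" where
  "walk_weight p = sum_list (map (\<lambda>(a, b). dist a b) (zip p (tl p)))"

definition is_tree :: "pt set \<Rightarrow> pt set set \<Rightarrow> bool" where
  "is_tree V E \<longleftrightarrow>
     finite V \<and> V \<noteq> {} \<and>
     E \<subseteq> {{u, v} | u v. u \<in> V \<and> v \<in> V \<and> u \<noteq> v} \<and>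
     (\<forall>u\<in>V. \<forall>v\<in>V. \<exists>p. is_walk E p \<and> hd p = u \<and> last p = v) \<and>
     \<not> (\<exists>c. is_walk E c \<and> distinct c \<and> length c \<ge> 3 \<and> {last c, hd c} \<in> E)"

definition steiner_tree :: "pt set \<Rightarrow> pt set \<Rightarrow> pt set set \<Rightarrow> bool" where
  "steiner_tree S V E \<longleftrightarrow> is_tree V E \<and> S \<subseteq> V"

definition tree_dist :: "pt set set \<Rightarrow> pt \<Rightarrow> pt \<Rightarrow> real" where
  "tree_dist E u v = Inf {walk_weight p | p. is_walk E p \<and> distinct p \<and> hd p = u \<and> last p = v}"

definition dilation :: "pt set \<Rightarrow> pt set set \<Rightarrow> real" where
  "dilation S E = Sup {tree_dist E u v / dist u v | u v. u \<in> S \<and> v \<in> S \<and> u \<noteq> v}"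

end

theory Submission
  imports Defs
begin


fun prs :: "'a list \<Rightarrow> ('a \<times> 'a) list" where
  "prs (a # b # r) = (a, b) # prs (b # r)"
| "prs _ = []"

lemma zip_tl_prs: "zip w (tl w) = prs w"
  by (induction w rule: prs.induct) auto

lemma prs_append: "prs (xs @ y # zs) = prs (xs @ [y]) @ prs (y # zs)"
  by (induction xs rule: prs.induct) simp_all

lemma is_walk_prs: "is_walk E w \<longleftrightarrow> w \<noteq> [] \<and> (\<forall>(a,b)\<in>set (prs w). {a,b} \<in> E)"
  unfolding is_walk_def zip_tl_prs by simp

lemma walk_weight_prs: "walk_weight w = sum_list (map (\<lambda>(a, b). dist a b) (prs w))"
  unfolding walk_weight_def zip_tl_prs by simp

lemma shortcut:
  assumes "w \<noteq> []"
  shows "\<exists>w'. distinct w' \<and> w' \<noteq> [] \<and> hd w' = hd w \<and> last w' = last w \<and>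
     set (prs w') \<subseteq> set (prs w) \<and> set w' \<subseteq> set w"
  using assms
proof (induction "length w" arbitrary: w rule: less_induct)
  case less
  show ?case
  proof (cases "distinct w")
    case True then show ?thesis using less by blast
  next
    case False
    then obtain xs ys zs y where w: "w = xs @ [y] @ ys @ [y] @ zs"
      using not_distinct_decomp by blast
    let ?v = "xs @ [y] @ zs"
    have "length ?v < length w" using w by simp
    then obtain w' where w': "distinct w' \<and> w' \<noteq> [] \<and> hd w' = hd ?v \<and> last w' = last ?v \<and>
     set (prs w') \<subseteq> set (prs ?v) \<and> set w' \<subseteq> set ?v" using less by blast
    have "hd ?v = hd w" using w by (cases xs) auto
    moreover have "last ?v = last w" using w by (cases zs) auto
    moreover have "set (prs ?v) \<subseteq> set (prs w)"
      using w prs_append[of xs y zs] prs_append[of xs y "ys @ [y] @ zs"]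
        prs_append[of "y # ys" y zs] by auto
    moreover have "set ?v \<subseteq> set w" using w by auto
    ultimately show ?thesis using w' by (intro exI[of _ w']) (auto intro: order_trans)
  qed
qed

lemma weight_ge_dist: "w \<noteq> [] \<Longrightarrow> walk_weight w \<ge> dist (hd w) (last w)"
proof (induction w rule: prs.induct)
  case (1 a b r)
  have "dist a (last (b # r)) \<le> dist a b + dist b (last (b#r))" by (rule dist_triangle)
  then show ?case using 1 by (auto simp: walk_weight_prs)
qed (auto simp: walk_weight_prs)

lemma weight_through:
  assumes "x \<in> set w"
  shows "walk_weight w \<ge> dist (hd w) x + dist x (last w)"
proof -
  obtain as bs where w: "w = as @ x # bs" using assms split_list by metis
  have "walk_weight w = walk_weight (as @ [x]) + walk_weight (x # bs)"
    using prs_append[of as x bs] unfolding walk_weight_prs w by simp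
  moreover have "walk_weight (as @ [x]) \<ge> dist (hd w) x"
    using weight_ge_dist[of "as @ [x]"] w by (cases as) auto
  moreover have "walk_weight (x # bs) \<ge> dist x (last w)"
    using weight_ge_dist[of "x # bs"] w by (cases bs) auto
  ultimately show ?thesis by simp
qed

lemma prs_snoc: "w \<noteq> [] \<Longrightarrow> prs (w @ [a]) = prs w @ [(last w, a)]"
  by (induction w rule: prs.induct) auto

lemma prs_rev: "prs (rev w) = rev (map prod.swap (prs w))"
proof (induction w)
  case (Cons a w)
  show ?case
  proof (cases w)
    case Nil then show ?thesis by simp
  next
    case (Cons b r)
    note wc = Cons
    have "prs (rev (a # w)) = prs (rev w @ [a])" by simp
    also have "\<dots> = prs (rev w) @ [(hd w, a)]" using prs_snoc[of "rev w" a] Cons by (simp add: last_rev)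
    finally show ?thesis using Cons.IH wc by simp
  qed
qed simp

lemma prs_concat:
  assumes "a \<noteq> []" "b \<noteq> []" "last a = hd b"
  shows "prs (a @ tl b) = prs a @ prs b"
proof -
  obtain xs y where a: "a = xs @ [y]" using assms(1) by (metis append_butlast_last_id)
  obtain zs where b: "b = y # zs" using assms a by (cases b) auto
  show ?thesis using prs_append[of xs y zs] a b by simp
qed

lemma prs_set: "set (prs w) \<subseteq> set w \<times> set w"
  by (induction w rule: prs.induct) auto

lemma prs_nth: "set (prs xs) = {(xs!k, xs!Suc k)|k. Suc k < length xs}"
proof (induction xs rule: prs.induct)
  case (1 a b r)
  have "set (prs (a # b # r)) = insert (a,b) {((b#r)!k, (b#r)!Suc k)|k. Suc k < length (b#r)}"
    using 1 by simp
  also have "\<dots> = {((a#b#r)!k, (a#b#r)!Suc k)|k. Suc k < length (a#b#r)}"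
  proof (intro set_eqI iffI)
    fix z assume "z \<in> insert (a,b) {((b#r)!k, (b#r)!Suc k)|k. Suc k < length (b#r)}"
    then consider "z = (a,b)" | k where "z = ((b#r)!k, (b#r)!Suc k)" "Suc k < length (b#r)" by blast
    then show "z \<in> {((a#b#r)!k, (a#b#r)!Suc k)|k. Suc k < length (a#b#r)}"
    proof cases
      case 1 then show ?thesis by (intro CollectI exI[of _ 0]) simp
    next
      case (2 k) then show ?thesis by (intro CollectI exI[of _ "Suc k"]) simp
    qed
  next
    fix z assume "z \<in> {((a#b#r)!k, (a#b#r)!Suc k)|k. Suc k < length (a#b#r)}"
    then obtain k where k: "z = ((a#b#r)!k, (a#b#r)!Suc k)" "Suc k < length (a#b#r)" by blast
    show "z \<in> insert (a,b) {((b#r)!k, (b#r)!Suc k)|k. Suc k < length (b#r)}"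
    proof (cases k)
      case 0 then show ?thesis using k by simp
    next
      case (Suc k') then show ?thesis using k by auto
    qed
  qed
  finally show ?case .
qed auto

definition ca :: "pt set set \<Rightarrow> pt \<Rightarrow> pt \<Rightarrow> pt \<Rightarrow> bool" where
  "ca E x q p \<longleftrightarrow> (\<exists>w. is_walk E w \<and> hd w = q \<and> last w = p \<and> x \<notin> set w)"

lemma walk_rev: "is_walk E w \<Longrightarrow> is_walk E (rev w)"
  unfolding is_walk_prs prs_rev by (auto simp: insert_commute)

lemma ca_sym: "ca E x q p \<Longrightarrow> ca E x p q"
proof -
  assume "ca E x q p"
  then obtain w where w: "is_walk E w" "hd w = q" "last w = p" "x \<notin> set w" unfolding ca_def by blast
  then have "w \<noteq> []" unfolding is_walk_def by auto
  then have "is_walk E (rev w) \<and> hd (rev w) = p \<and> last (rev w) = q \<and> x \<notin> set (rev w)"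
    using w walk_rev by (simp add: hd_rev last_rev)
  then show ?thesis unfolding ca_def by blast
qed

lemma ca_trans: "ca E x q p \<Longrightarrow> ca E x p r \<Longrightarrow> ca E x q r"
proof -
  assume "ca E x q p" "ca E x p r"
  then obtain w1 w2 where w1: "is_walk E w1" "hd w1 = q" "last w1 = p" "x \<notin> set w1"
    and w2: "is_walk E w2" "hd w2 = p" "last w2 = r" "x \<notin> set w2" unfolding ca_def by blast
  have ne: "w1 \<noteq> []" "w2 \<noteq> []" using w1 w2 unfolding is_walk_def by auto
  have "is_walk E (w1 @ tl w2)"
    using w1 w2 ne prs_concat[of w1 w2] unfolding is_walk_prs by auto
  moreover have "hd (w1 @ tl w2) = q" using ne w1 by simp
  moreover have "last (w1 @ tl w2) = r"
  proof (cases "tl w2 = []")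
    case True
    then have "w2 = [p]" using ne w2 by (metis list.collapse)
    then show ?thesis using True w1 w2 by simp
  next
    case False
    then show ?thesis using w2 ne by (simp add: last_tl)
  qed
  moreover have "set (tl w2) \<subseteq> set w2" by (cases w2) auto
  then have "x \<notin> set (w1 @ tl w2)" using w1 w2 by auto
  ultimately show ?thesis unfolding ca_def by blast
qed

lemma walk_in_V:
  assumes "E \<subseteq> {{u, v} | u v. u \<in> V \<and> v \<in> V \<and> u \<noteq> v}" "is_walk E w" "hd w \<in> V"
  shows "set w \<subseteq> V"
proof
  fix z assume z: "z \<in> set w"
  show "z \<in> V"
  proof (cases "z = hd w")
    case True then show ?thesis using assms by simp
  next
    case False
    then obtain k where k: "k < length w" "w ! k = z" "k \<noteq> 0" using z
      by (metis hd_conv_nth in_set_conv_nth length_greater_0_conv)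
    then obtain k' where "k = Suc k'" using not0_implies_Suc by blast
    then have "(w!k', z) \<in> set (prs w)" using prs_nth k by auto
    then have "{w!k', z} \<in> E" using assms(2) unfolding is_walk_prs by auto
    then show ?thesis using assms(1) by (auto simp: doubleton_eq_iff)
  qed
qed

lemma cyc2:
  assumes tree: "is_tree V E" and e: "{z, y} \<in> E" and c1: "ca E z p y" and c2: "ca E y p z"
  shows False
proof -
  obtain w1 w2 where w1: "is_walk E w1" "hd w1 = p" "last w1 = y" "z \<notin> set w1"
    and w2: "is_walk E w2" "hd w2 = p" "last w2 = z" "y \<notin> set w2" using c1 c2 unfolding ca_def by blast
  have ne: "w1 \<noteq> []" "w2 \<noteq> []" using w1 w2 unfolding is_walk_def by auto
  have yz: "y \<noteq> z" using e tree unfolding is_tree_def by (auto simp: doubleton_eq_iff)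
  let ?W = "rev w1 @ tl w2"
  have pW: "prs ?W = prs (rev w1) @ prs w2"
    using prs_concat[of "rev w1" w2] ne w1 w2 by (simp add: last_rev)
  have "is_walk E (rev w1)" using walk_rev w1(1) by blast
  then have wW: "is_walk E ?W" using w2(1) ne pW unfolding is_walk_prs by auto
  have hW: "hd ?W = y" using ne w1 by (simp add: hd_rev)
  have "tl w2 \<noteq> []"
  proof
    assume "tl w2 = []"
    then have "w2 = [p]" using ne w2 by (metis list.collapse)
    then have "p = z" using w2 by simp
    then show False using w1 ne by (metis hd_in_set)
  qed
  then have lW: "last ?W = z" using w2 ne by (simp add: last_tl)
  obtain c where c: "distinct c" "c \<noteq> []" "hd c = y" "last c = z" "set (prs c) \<subseteq> set (prs ?W)"
    using shortcut[of ?W] hW lW ne by auto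
  have wc: "is_walk E c" using c wW unfolding is_walk_prs by auto
  have l3: "length c \<ge> 3"
  proof (rule ccontr)
    assume "\<not> length c \<ge> 3"
    moreover have "length c \<noteq> 1" using c yz by (metis One_nat_def hd_conv_nth last_conv_nth diff_Suc_1)
    moreover have "length c \<noteq> 0" using c by simp
    ultimately have "length c = 2" by linarith
    then obtain a b where "c = [a, b]"
      by (metis (no_types, opaque_lifting) One_nat_def Suc_1 Suc_length_conv length_0_conv)
    then have "c = [y, z]" using c by simp
    then have "(y, z) \<in> set (prs ?W)" using c by auto
    then have "(y, z) \<in> set (prs (rev w1)) \<or> (y, z) \<in> set (prs w2)" using pW by simp
    then show False using prs_set[of "rev w1"] prs_set[of w2] w1 w2 by auto
  qed
  have "{last c, hd c} \<in> E" using c e by (simp add: insert_commute)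
  then show False using tree wc c l3 unfolding is_tree_def by blast
qed

lemma heavy_nb:
  assumes tree: "is_tree V E" and SV: "S \<subseteq> V" and fin: "finite S" and x: "x \<in> V"
    and big: "2 * card {q\<in>S. ca E x q p} > n"
  shows "\<exists>y. {x, y} \<in> E \<and> y \<in> V \<and> 2 * card {q\<in>S. ca E x q y} > n"
proof -
  have Ep: "E \<subseteq> {{u, v} | u v. u \<in> V \<and> v \<in> V \<and> u \<noteq> v}" using tree unfolding is_tree_def by blast
  have "{q\<in>S. ca E x q p} \<noteq> {}" using big by (metis card.empty mult_0_right not_less0)
  then obtain q where q: "q \<in> S" "ca E x q p" by blast
  then obtain w1 where w1: "is_walk E w1" "hd w1 = q" "last w1 = p" "x \<notin> set w1" unfolding ca_def by blast
  have "w1 \<noteq> []" using w1 unfolding is_walk_def by auto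
  then have pw: "p \<in> set w1" using w1 by (metis last_in_set)
  then have pV: "p \<in> V" using walk_in_V[OF Ep w1(1)] w1 q SV by auto
  have px: "p \<noteq> x" using pw w1 by auto
  obtain w where w: "is_walk E w" "hd w = p" "last w = x" using tree pV x unfolding is_tree_def by blast
  have "w \<noteq> []" using w unfolding is_walk_def by auto
  then have "x \<in> set w" using w by (metis last_in_set)
  then obtain as bs where wd: "w = as @ x # bs" "x \<notin> set as" by (meson split_list_first)
  have asne: "as \<noteq> []" using wd w px by auto
  have "prs w = prs as @ [(last as, x)] @ prs (x # bs)"
    using wd prs_append[of as x bs] prs_snoc[OF asne] by simp
  then have e: "{last as, x} \<in> E" and was: "is_walk E as"
    using w asne unfolding is_walk_prs by auto
  have "ca E x p (last as)" unfolding ca_def using was wd w asne by (intro exI[of _ as]) (auto simp: hd_append)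
  then have sub: "{q\<in>S. ca E x q p} \<subseteq> {q\<in>S. ca E x q (last as)}" using ca_trans by blast
  have "card {q\<in>S. ca E x q p} \<le> card {q\<in>S. ca E x q (last as)}"
    by (rule card_mono[OF _ sub]) (use fin in auto)
  moreover have "last as \<in> V" using e Ep by (auto simp: doubleton_eq_iff)
  ultimately show ?thesis using big e by (intro exI[of _ "last as"]) (auto simp: insert_commute)
qed

lemma centroid:
  assumes tree: "is_tree V E" and SV: "S \<subseteq> V" and card: "card S = n"
  shows "\<exists>x\<in>V. \<forall>p. 2 * card {q\<in>S. ca E x q p} \<le> n"
proof (rule ccontr)
  assume "\<not> ?thesis"
  then have "\<forall>x\<in>V. \<exists>p. 2 * card {q\<in>S. ca E x q p} > n" by (auto simp: not_le)
  have finV: "finite V" and Vne: "V \<noteq> {}" using tree unfolding is_tree_def by auto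
  have fin: "finite S" using SV finV finite_subset by blast
  have Ep: "E \<subseteq> {{u, v} | u v. u \<in> V \<and> v \<in> V \<and> u \<noteq> v}" using tree unfolding is_tree_def by blast
  have "\<forall>x\<in>V. \<exists>y. {x, y} \<in> E \<and> y \<in> V \<and> 2 * card {q\<in>S. ca E x q y} > n"
    using heavy_nb[OF tree SV fin] \<open>\<forall>x\<in>V. \<exists>p. 2 * card {q\<in>S. ca E x q p} > n\<close> by blast
  then have "\<exists>f. \<forall>x\<in>V. {x, f x} \<in> E \<and> f x \<in> V \<and> 2 * card {q\<in>S. ca E x q (f x)} > n"
    by (rule bchoice)
  then obtain f where fall: "\<forall>x\<in>V. {x, f x} \<in> E \<and> f x \<in> V \<and> 2 * card {q\<in>S. ca E x q (f x)} > n"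
    by blast
  have f: "\<And>x. x \<in> V \<Longrightarrow> {x, f x} \<in> E \<and> f x \<in> V \<and> 2 * card {q\<in>S. ca E x q (f x)} > n"
    using fall by blast
  obtain x0 where x0: "x0 \<in> V" using Vne by blast
  define s where "s k = (f ^^ k) x0" for k
  have sV: "s k \<in> V" for k by (induction k) (auto simp: s_def x0 f)
  have sS: "s (Suc k) = f (s k)" for k by (simp add: s_def)
  have "\<not> inj s"
  proof
    assume "inj s"
    then have "infinite (range s)" using finite_imageD by blast
    moreover have "range s \<subseteq> V" using sV by auto
    ultimately show False using finV finite_subset by blast
  qed
  then have "\<exists>j. \<exists>i<j. s i = s j" unfolding inj_def by (metis linorder_neqE_nat)
  then obtain j where j: "\<exists>i<j. s i = s j" and jmin: "\<And>j'. j' < j \<Longrightarrow> \<not> (\<exists>i<j'. s i = s j')"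
    using exists_least_iff[of "\<lambda>j. \<exists>i<j. s i = s j"] by blast
  then obtain i where ij: "i < j" "s i = s j" by blast
  have injs: "inj_on s {..<j}"
    unfolding inj_on_def by (metis lessThan_iff jmin linorder_neqE_nat)
  have noloop: "{z, z} \<notin> E" for z using Ep by (auto simp: doubleton_eq_iff)
  consider "j = Suc i" | "j = Suc (Suc i)" | "j \<ge> i + 3" using ij by linarith
  then show False
  proof cases
    case 1
    then show False using f[OF sV[of i]] ij noloop sS by metis
  next
    case 2
    let ?z = "s i" and ?y = "s (Suc i)"
    have fz: "f ?z = ?y" using sS by simp
    have fy: "f ?y = ?z" using sS 2 ij by simp
    let ?A = "{q\<in>S. ca E ?z q ?y}" and ?B = "{q\<in>S. ca E ?y q ?z}"
    have A: "2 * card ?A > n" using f[OF sV[of i]] fz by simp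
    have B: "2 * card ?B > n" using f[OF sV[of "Suc i"]] fy by simp
    have "card (?A \<union> ?B) \<le> n" using card fin by (metis (no_types, lifting) Un_subset_iff card_mono mem_Collect_eq subsetI)
    moreover have "card (?A \<union> ?B) + card (?A \<inter> ?B) = card ?A + card ?B"
      using card_Un_Int[of ?A ?B] fin by auto
    ultimately have "?A \<inter> ?B \<noteq> {}"
    proof -
      assume u: "card (?A \<union> ?B) \<le> n" "card (?A \<union> ?B) + card (?A \<inter> ?B) = card ?A + card ?B"
      show "?A \<inter> ?B \<noteq> {}"
      proof
        assume "?A \<inter> ?B = {}"
        then have "card ?A + card ?B \<le> n" using u by simp
        then show False using A B by linarith
      qed
    qed
    then obtain p where "ca E ?z p ?y" "ca E ?y p ?z" by blast
    moreover have "{?z, ?y} \<in> E" using f[OF sV[of i]] fz by simp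
    ultimately show False using cyc2[OF tree] by blast
  next
    case 3
    define c where "c = map s [i..<j]"
    have "inj_on s {i..<j}" by (rule inj_on_subset[OF injs]) auto
    then have dc: "distinct c" unfolding c_def by (simp add: distinct_map)
    have lc: "length c \<ge> 3" using 3 by (simp add: c_def)
    have cn: "c ! k = s (i + k)" if "k < length c" for k using that by (simp add: c_def)
    have wc: "is_walk E c" unfolding is_walk_prs prs_nth
    proof (intro conjI ballI)
      show "c \<noteq> []" using lc by auto
      fix ab assume "ab \<in> {(c ! k, c ! Suc k) |k. Suc k < length c}"
      then obtain k where "Suc k < length c" "ab = (c ! k, c ! Suc k)" by blast
      then have "ab = (s (i+k), f (s (i+k)))" using cn sS by simp
      then show "case ab of (a, b) \<Rightarrow> {a, b} \<in> E" using f sV by simp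
    qed
    have "hd c = s i" using ij by (simp add: c_def upt_conv_Cons)
    moreover have "last c = s (j - 1)" using ij by (simp add: c_def last_map)
    moreover have "f (s (j-1)) = s i" using ij sS by (metis Suc_diff_1 gr_implies_not_zero not_gr_zero)
    ultimately have "{last c, hd c} \<in> E" using f sV by metis
    then show False using tree wc dc lc unfolding is_tree_def by blast
  qed
qed



definition pp :: "nat \<Rightarrow> int \<Rightarrow> pt" where
  "pp n j = vector [cos (2*pi*j/n), sin (2*pi*j/n)]"

lemma norm2: "norm (x::pt) = sqrt ((x$1)^2 + (x$2)^2)"
  by (simp add: norm_vec_def L2_set_def sum_2)

lemma inner2: "inner (x::pt) y = x$1 * y$1 + x$2 * y$2"
  by (simp add: inner_vec_def sum_2)

lemma ceil_lt: "real_of_int \<lceil>y\<rceil> < y + 1"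
  using ceiling_correct[of y] by linarith

lemma norm_pp: "norm (pp n j) = 1"
  by (simp add: norm2 pp_def)

lemma pp_eq: "pp n a = pp n b \<longleftrightarrow> (\<exists>m::int. 2*pi*a/n = 2*pi*b/n + 2*pi*m)"
proof -
  have "pp n a = pp n b \<longleftrightarrow> sin (2*pi*a/n) = sin (2*pi*b/n) \<and> cos (2*pi*a/n) = cos (2*pi*b/n)"
    unfolding pp_def by (metis vector_2)
  then show ?thesis using sin_cos_eq_iff by presburger
qed

lemma pp_inj:
  assumes "n > 0" "pp n a = pp n b" shows "int n dvd (a - b)"
proof -
  obtain m :: int where "2*pi*a/n = 2*pi*b/n + 2*pi*m" using assms pp_eq by blast
  then have "pi * (2 * (real_of_int a - (b + m * n))) = 0" using assms by (simp add: field_simps)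
  then have "real_of_int a = b + m * n" by simp
  then have "a = b + m * int n" by (metis of_int_eq_iff of_int_add of_int_mult of_int_of_nat_eq)
  then show ?thesis by simp
qed

lemma pp_mod: "n > 0 \<Longrightarrow> pp n j = pp n (j mod int n)"
  unfolding pp_eq
proof (intro exI[of _ "j div int n"])
  assume "n > 0"
  have "real_of_int j = real_of_int (j mod int n) + real n * real_of_int (j div int n)"
    by (metis div_mult_mod_eq add.commute mult.commute of_int_add of_int_mult of_int_of_nat_eq)
  then show "2*pi*j/n = 2*pi*(j mod int n)/n + 2*pi*(j div int n)"
    using \<open>n > 0\<close> by (simp add: field_simps)
qed

lemma dist_pp: 
  assumes "n > 1" shows "dist (pp n j) (pp n (j+1)) = 2 * sin (pi / n)"
proof -
  let ?a = "2*pi*j/n" and ?b = "2*pi*(j+1)/n"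
  have "(dist (pp n j) (pp n (j+1)))^2 = (cos ?a - cos ?b)^2 + (sin ?a - sin ?b)^2"
    by (simp add: dist_norm norm2 pp_def)
  also have "\<dots> = 2 - 2 * cos (?a - ?b)"
    by (simp add: cos_diff power2_eq_square algebra_simps)
  also have "?a - ?b = - (2 * (pi / n))" using assms by (simp add: field_simps)
  also have "2 - 2 * cos (- (2 * (pi / n))) = (2 * sin (pi / n))^2"
    using cos_double_sin[of "pi / n"] by (simp add: power2_eq_square)
  finally have "(dist (pp n j) (pp n (j+1)))^2 = (2 * sin (pi / n))^2" .
  moreover have "sin (pi / n) > 0" using assms by (intro sin_gt_zero) (auto simp: field_simps)
  ultimately show ?thesis by (smt (verit) power2_eq_imp_eq zero_le_dist)
qed

lemma inner_pp: "inner (pp n j) x = x$1 * cos (2*pi*j/n) + x$2 * sin (2*pi*j/n)"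
  by (simp add: inner2 pp_def mult.commute)

lemma sum_ge2:
  assumes "inner (pp n i + pp n (i+1)) x \<le> 0"
  shows "dist (pp n i) x + dist x (pp n (i+1)) \<ge> 2"
proof -
  have "inner (pp n i) (pp n i - x) \<le> norm (pp n i) * norm (pp n i - x)" by (rule norm_cauchy_schwarz)
  then have 1: "1 - inner (pp n i) x \<le> dist (pp n i) x"
    by (simp add: inner_diff_right norm_pp dist_norm flip: power2_norm_eq_inner)
  have "inner (pp n (i+1)) (pp n (i+1) - x) \<le> norm (pp n (i+1)) * norm (pp n (i+1) - x)" by (rule norm_cauchy_schwarz)
  then have 2: "1 - inner (pp n (i+1)) x \<le> dist x (pp n (i+1))"
    by (simp add: inner_diff_right norm_pp dist_norm norm_minus_commute flip: power2_norm_eq_inner)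
  show ?thesis using 1 2 assms by (simp add: inner_add_left)
qed

lemma inner_mid:
  assumes n: "n > 0"
  shows "inner (pp n i + pp n (i+1)) x = 2 * cos (pi/n) * (x$1 * cos ((2*i+1)*pi/n) + x$2 * sin ((2*i+1)*pi/n))"
proof -
  define c where "c = (2 * real_of_int i + 1)*pi/n"
  define d where "d = pi/n"
  have a: "2*pi*i/n = c - d" unfolding c_def d_def using n by (simp add: field_simps)
  have b: "2*pi*(i+1)/n = c + d" unfolding c_def d_def using n by (simp add: field_simps)
  have "inner (pp n i + pp n (i+1)) x = x$1 * (cos (c - d) + cos (c + d)) + x$2 * (sin (c - d) + sin (c + d))"
    unfolding inner_add_left inner_pp a b by (simp add: algebra_simps)
  also have "\<dots> = 2 * cos d * (x$1 * cos c + x$2 * sin c)"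
    by (simp add: cos_add cos_diff sin_add sin_diff algebra_simps)
  finally show ?thesis unfolding c_def d_def .
qed

lemma angle_select:
  assumes n: "n > 1" and W: "\<forall>j0::int. \<exists>t::nat. t < n div 2 \<and> j0 + int t \<in> B"
  shows "\<exists>i\<in>B. a * cos ((2*i+1)*pi/n) + b * sin ((2*i+1)*pi/n) \<le> 0"
proof (cases "a = 0 \<and> b = 0")
  case True
  then show ?thesis using W by fastforce
next
  case False
  define r where "r = sqrt (a^2 + b^2)"
  have "a^2 + b^2 > 0" using False by (simp add: sum_power2_gt_zero_iff)
  then have r: "r > 0" unfolding r_def by simp
  have r2: "r^2 = a^2 + b^2" unfolding r_def by simp
  have "(a/r)^2 + (b/r)^2 = (a^2 + b^2) / r^2" by (simp add: power_divide add_divide_distrib)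
  also have "\<dots> = 1" unfolding r2 using \<open>a^2 + b^2 > 0\<close> by (metis divide_self order_less_irrefl)
  finally have "(a/r)^2 + (b/r)^2 = 1" .
  then obtain \<phi> where phi: "a/r = cos \<phi>" "b/r = sin \<phi>" using sincos_total_2pi by metis
  have ab: "a = r * cos \<phi>" "b = r * sin \<phi>" using phi r by (auto simp: field_simps)
  define s where "s = (\<phi> + pi/2) * n / pi"
  define j0 where "j0 = \<lceil>(s - 1)/2\<rceil>"
  obtain t where t: "t < n div 2" "j0 + int t \<in> B" using W by blast
  define i where "i = j0 + int t"
  have c1: "(s - 1)/2 \<le> j0" unfolding j0_def by simp
  have c2: "real_of_int j0 < (s - 1)/2 + 1" unfolding j0_def by (rule ceil_lt)
  have k: "2 * real t + 2 \<le> real n" using t(1) by linarith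
  have lo: "s \<le> 2*i+1" using c1 unfolding i_def by simp
  have "2 * real_of_int j0 < 2 * ((s - 1)/2 + 1)" using c2 by (rule mult_strict_left_mono) simp
  also have "2 * ((s - 1)/2 + 1) = s + 1" by (simp add: field_simps)
  finally have c3: "2 * real_of_int j0 < s + 1" .
  have hi: "2*i+1 \<le> s + n" using c3 k unfolding i_def by simp
  define \<theta> where "\<theta> = (2 * real_of_int i + 1)*pi/n"
  have npos: "real n > 0" using n by simp
  have "s * pi / n = \<phi> + pi/2" unfolding s_def using npos by (simp add: field_simps)
  moreover have "s * pi / n \<le> \<theta>" unfolding \<theta>_def using lo npos
    by (simp add: divide_right_mono mult_right_mono)
  moreover have "\<theta> \<le> (s + n) * pi / n" unfolding \<theta>_def using hi npos
    by (simp add: divide_right_mono mult_right_mono)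
  moreover have "(s + n) * pi / n = \<phi> + 3*pi/2" unfolding s_def using npos by (simp add: field_simps)
  ultimately have th: "\<phi> + pi/2 \<le> \<theta>" "\<theta> \<le> \<phi> + 3*pi/2" by linarith+
  have "0 \<le> cos (\<theta> - \<phi> - pi)" using th by (intro cos_ge_zero) auto
  moreover have "cos (\<theta> - \<phi> - pi) = - cos (\<theta> - \<phi>)" by (simp add: cos_diff)
  ultimately have "cos (\<theta> - \<phi>) \<le> 0" by simp
  moreover have "a * cos \<theta> + b * sin \<theta> = r * cos (\<theta> - \<phi>)" unfolding ab cos_diff by (simp add: algebra_simps)
  ultimately have "a * cos \<theta> + b * sin \<theta> \<le> 0" using r by (simp add: mult_nonneg_nonpos)
  then show ?thesis using t(2) unfolding \<theta>_def i_def by blast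
qed

lemma pp_in: "n > 0 \<Longrightarrow> pp n j \<in> pp n ` {0..<int n}"
proof -
  assume n: "n > 0"
  have "j mod int n \<in> {0..<int n}" using n by simp
  then show ?thesis using pp_mod[OF n, of j] by blast
qed

lemma window:
  assumes n: "n > 1" and cent: "\<forall>p. 2 * card {q\<in>S. ca E x q p} \<le> n" and S: "S = pp n ` {0..<int n}"
  shows "\<exists>t::nat. t < n div 2 \<and> \<not> ca E x (pp n (j0 + int t)) (pp n (j0 + int t + 1))"
proof (rule ccontr)
  assume "\<not> ?thesis"
  then have all: "\<And>t. t < n div 2 \<Longrightarrow> ca E x (pp n (j0 + int t)) (pp n (j0 + int t + 1))" by blast
  let ?k = "n div 2"
  have k1: "?k \<ge> 1" using n by simp
  have cl: "ca E x (pp n (j0 + int t)) (pp n j0)" if "t \<le> ?k" for t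
    using that
  proof (induction t)
    case 0
    have c: "ca E x (pp n j0) (pp n (j0+1))" using all[of 0] k1 by simp
    have "ca E x (pp n j0) (pp n j0)" using ca_trans[OF c ca_sym[OF c]] .
    then show ?case by simp
  next
    case (Suc t)
    have "ca E x (pp n (j0 + int t)) (pp n (j0 + int t + 1))" using all Suc.prems by simp
    then have h0: "ca E x (pp n (j0 + int t + 1)) (pp n (j0 + int t))" by (rule ca_sym)
    have eq: "j0 + int (Suc t) = j0 + int t + 1" by simp
    have h1: "ca E x (pp n (j0 + int (Suc t))) (pp n (j0 + int t))" unfolding eq by (rule h0)
    have h2: "ca E x (pp n (j0 + int t)) (pp n j0)" using Suc.IH Suc.prems by simp
    show ?case using ca_trans[OF h1 h2] .
  qed
  let ?T = "(\<lambda>t. pp n (j0 + int t)) ` {0..?k}"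
  have sub: "?T \<subseteq> {q\<in>S. ca E x q (pp n j0)}" using cl pp_in[of n] S n by auto
  have inj: "inj_on (\<lambda>t. pp n (j0 + int t)) {0..?k}"
  proof (rule inj_onI)
    fix t1 t2 assume t: "t1 \<in> {0..?k}" "t2 \<in> {0..?k}" "pp n (j0 + int t1) = pp n (j0 + int t2)"
    then have "int n dvd (int t1 - int t2)" using pp_inj[of n] n by fastforce
    moreover have "\<bar>int t1 - int t2\<bar> < int n" using t n by auto
    ultimately show "t1 = t2"
    proof -
      assume d: "int n dvd (int t1 - int t2)" "\<bar>int t1 - int t2\<bar> < int n"
      show "t1 = t2"
      proof (rule ccontr)
        assume "t1 \<noteq> t2"
        then have "\<bar>int n\<bar> \<le> \<bar>int t1 - int t2\<bar>" using dvd_imp_le_int[of "int t1 - int t2" "int n"] d(1) by simp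
        then show False using d(2) by simp
      qed
    qed
  qed
  have "card ?T = ?k + 1" using card_image[OF inj] by simp
  moreover have "finite S" using S by simp
  ultimately have "?k + 1 \<le> card {q\<in>S. ca E x q (pp n j0)}" using sub by (metis (no_types, lifting) card_mono finite_subset mem_Collect_eq subsetI)
  then show False using cent[rule_format, of "pp n j0"] by linarith
qed



lemma sin_lt_x:
  assumes "0 < x" "x \<le> pi" shows "sin x < x"
proof -
  have "sin x = 2 * sin (x/2) * cos (x/2)" using sin_double[of "x/2"] by simp
  moreover have "sin (x/2) > 0" using assms by (intro sin_gt_zero) auto
  moreover have "sin (x/2) \<le> x/2" using assms by (intro sin_x_le_x) auto
  moreover have "cos (x/2) < cos 0" using assms by (intro cos_monotone_0_pi) auto
  ultimately have "sin x < 2 * sin (x/2)" by (simp add: mult_less_cancel_left_pos)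
  then show ?thesis using \<open>sin (x/2) \<le> x/2\<close> by linarith
qed

lemma conv_pos: "convex_position (pp n ` {0..<int n})"
  unfolding convex_position_def
proof
  fix p assume p: "p \<in> pp n ` {0..<int n}"
  let ?S = "pp n ` {0..<int n}"
  have hs: "convex hull ?S \<subseteq> cball 0 1"
    by (rule hull_minimal) (auto simp: norm_pp)
  have "p \<in> closure (convex hull ?S)" using p by (meson closure_subset hull_subset subsetD)
  moreover have "p \<notin> interior (convex hull ?S)"
  proof
    assume "p \<in> interior (convex hull ?S)"
    then have "p \<in> ball 0 1" using interior_mono[OF hs] by auto
    then show False using p norm_pp by auto
  qed
  ultimately show "p \<in> frontier (convex hull ?S)" unfolding frontier_def by blast
qed

theorem theorem1:
  fixes n :: nat
  assumes "n > 1"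
  shows "\<exists>S :: pt set. finite S \<and> card S = n \<and> convex_position S \<and>
           (\<forall>V E. steiner_tree S V E \<longrightarrow> dilation S E \<ge> 1 / sin (pi / real n)) \<and>
           1 / sin (pi / real n) > real n / pi"
proof -
  have n: "n > 1" by fact
  have npos: "real n > 0" using n by simp
  define S where "S = pp n ` {0..<int n}"
  have finS: "finite S" unfolding S_def by simp
  have injpp: "inj_on (pp n) {0..<int n}"
  proof (rule inj_onI)
    fix a b assume ab: "a \<in> {0..<int n}" "b \<in> {0..<int n}" "pp n a = pp n b"
    then have "int n dvd (a - b)" using pp_inj n by simp
    moreover have "\<bar>a - b\<bar> < int n" using ab by auto
    ultimately show "a = b"
    proof -
      assume d: "int n dvd (a - b)" "\<bar>a - b\<bar> < int n"
      show "a = b"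
      proof (rule ccontr)
        assume "a \<noteq> b"
        then have "\<bar>int n\<bar> \<le> \<bar>a - b\<bar>" using dvd_imp_le_int[of "a - b" "int n"] d(1) by simp
        then show False using d(2) by simp
      qed
    qed
  qed
  have cardS: "card S = n" unfolding S_def using card_image[OF injpp] by simp
  have spos: "sin (pi / n) > 0" using n by (intro sin_gt_zero) (auto simp: field_simps)
  have slt: "sin (pi / n) < pi / n" using n by (intro sin_lt_x) (auto simp: field_simps)
  have last: "1 / sin (pi / real n) > real n / pi"
  proof -
    have h: "sin (pi / n) * real n < pi" using slt npos by (simp add: pos_less_divide_eq)
    then show ?thesis using spos npos pi_gt_zero by (simp add: pos_divide_less_eq pos_less_divide_eq mult.commute)
  qed
  have main: "dilation S E \<ge> 1 / sin (pi / real n)" if st: "steiner_tree S V E" for V E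
  proof -
    have tree: "is_tree V E" and SV: "S \<subseteq> V" using st unfolding steiner_tree_def by auto
    obtain x where x: "x \<in> V" "\<forall>p. 2 * card {q\<in>S. ca E x q p} \<le> n"
      using centroid[OF tree SV cardS] by blast
    define B where "B = {j. \<not> ca E x (pp n j) (pp n (j+1))}"
    have W: "\<forall>j0::int. \<exists>t::nat. t < n div 2 \<and> j0 + int t \<in> B"
      using window[OF n x(2) S_def] unfolding B_def by (simp add: add.assoc)
    obtain i where iB: "i \<in> B" and
      le: "x$1 * cos ((2*i+1)*pi/n) + x$2 * sin ((2*i+1)*pi/n) \<le> 0"
      using angle_select[OF n W] by blast
    have p1: "0 \<le> pi / n" by simp
    have p2: "pi / n \<le> pi / 2" using n by (intro divide_left_mono) auto
    have p0: "-(pi/2) \<le> pi / n" using p1 pi_gt_zero by linarith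
    have cp: "cos (pi / n) \<ge> 0" using cos_ge_zero[OF p0 p2] .
    have im: "inner (pp n i + pp n (i+1)) x = 2 * cos (pi/n) * (x$1 * cos ((2 * real_of_int i + 1)*pi/n) + x$2 * sin ((2 * real_of_int i + 1)*pi/n))"
      by (rule inner_mid) (use n in simp)
    have "inner (pp n i + pp n (i+1)) x \<le> 0" unfolding im using le cp
      by (simp add: mult_nonneg_nonpos)
    then have d2: "dist (pp n i) x + dist x (pp n (i+1)) \<ge> 2" by (rule sum_ge2)
    define u where "u = pp n i"
    define v where "v = pp n (i+1)"
    have uS: "u \<in> S" "v \<in> S" unfolding u_def v_def S_def using pp_in n by auto
    have uv: "u \<noteq> v"
    proof
      assume "u = v"
      then have "pp n i = pp n (i+1)" unfolding u_def v_def .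
      then have "int n dvd (i - (i+1))" using pp_inj[of n i "i+1"] n by simp
      then show False using n by simp
    qed
    let ?W = "{walk_weight p | p. is_walk E p \<and> distinct p \<and> hd p = u \<and> last p = v}"
    have Wne: "?W \<noteq> {}"
    proof -
      obtain w where w: "is_walk E w" "hd w = u" "last w = v" using tree uS SV unfolding is_tree_def by blast
      then have "w \<noteq> []" unfolding is_walk_def by auto
      then obtain w' where "distinct w'" "w' \<noteq> []" "hd w' = u" "last w' = v" "set (prs w') \<subseteq> set (prs w)"
        using shortcut[of w] w by auto
      moreover then have "is_walk E w'" using w unfolding is_walk_prs by auto
      ultimately show ?thesis by blast
    qed
    have Wge: "y \<ge> 2" if "y \<in> ?W" for y
    proof -
      obtain p where p: "y = walk_weight p" "is_walk E p" "hd p = u" "last p = v" using \<open>y \<in> ?W\<close> by blast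
      have "x \<in> set p"
      proof (rule ccontr)
        assume "x \<notin> set p"
        then have "ca E x u v" unfolding ca_def using p by blast
        then show False using iB unfolding B_def u_def v_def by simp
      qed
      then have "walk_weight p \<ge> dist u x + dist x v" using weight_through p by metis
      then show ?thesis using d2 p unfolding u_def v_def by simp
    qed
    have td: "tree_dist E u v \<ge> 2" unfolding tree_dist_def
      by (rule cInf_greatest[OF Wne]) (use Wge in blast)
    have duv: "dist u v = 2 * sin (pi / n)" unfolding u_def v_def using dist_pp[OF n] by simp
    have "1 / sin (pi / real n) = 2 / dist u v" using duv spos by simp
    also have "\<dots> \<le> tree_dist E u v / dist u v" using td duv spos by (intro divide_right_mono) auto
    also have "\<dots> \<le> dilation S E" unfolding dilation_def
    proof (rule cSup_upper)
      show "tree_dist E u v / dist u v \<in> {tree_dist E u v / dist u v |u v. u \<in> S \<and> v \<in> S \<and> u \<noteq> v}"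
        using uS uv by blast
      have "{tree_dist E u v / dist u v |u v. u \<in> S \<and> v \<in> S \<and> u \<noteq> v} \<subseteq>
            (\<lambda>(u,v). tree_dist E u v / dist u v) ` (S \<times> S)" by auto
      moreover have "finite ((\<lambda>(u,v). tree_dist E u v / dist u v) ` (S \<times> S))" using finS by simp
      ultimately show "bdd_above {tree_dist E u v / dist u v |u v. u \<in> S \<and> v \<in> S \<and> u \<noteq> v}"
        by (meson bdd_above_finite finite_subset)
    qed
    finally show ?thesis .
  qed
  show ?thesis using finS cardS conv_pos[of n] main last unfolding S_def by blast
qed


end
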